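(* Let $A_1$ and $A_2$ be finite-dimensional simple evolution algebras over a field $\mathbb{K}$ with associated directed graphs $E$ and $F$ (relative to natural bases). Let $d_1$ (resp. $d_2$) be the greatest common divisor of the lengths of all closed paths in $E$ (resp. $F$). Then: \begin{enumerate} \item[(i)] The evolution algebra $A_1\otimes A_2$ is simple if and only if $\gcd(d_1,d_2)=1$. In particular, if $E$ and $F$ have closed paths of coprime lengths, then $A_1\otimes A_2$ is simple. \item[(ii)] The evolution algebra $A_1\otimes A_2$ is semisimple, i.e. a direct sum of simple evolution algebras. \end{enumerate}
   Context: An evolution algebra over $\mathbb{K}$ is a $\mathbb{K}$-algebra with a basis $\{e_1,\dots,e_n\}$ (natural basis) such that $e_ie_j=0$ for $i\ne j$; its structure matrix $(\omega_{ij})$ is given by $e_i^2=\sum_j\omega_{ji}e_j$. Its associated directed graph relative to this basis has vertex set $\{1,\dots,n\}$ and an edge from $i$ to $j$ whenever $\omega_{ji}\neq0$. A path is a finite sequence of edges $f_1\cdots f_m$ with the range of $f_i$ equal to the source of $f_{i+1}$; it is closed if its range equals its source; its length is $m$. The tensor product $A_1\otimes A_2$ of evolution algebras with natural bases $\{a_i\}$, $\{b_p\}$ is an evolution algebra with natural basis $\{a_i\otimes b_p\}$ and product $(a\otimes b)(a'\otimes b')=aa'\otimes bb'$. A $\mathbb{K}$-algebra is simple if $A^2\neq 0$ and its only ideals are $0$ and $A$. *)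

theory Defs
  imports Main
begin

text \<open>A finite-dimensional evolution algebra over a field 'a is given by a finite index set S
(its natural basis) and its structure matrix w, where w j i is the coefficient of e_j in e_i^2.
Elements are coordinate functions supported on S.\<close>

definition evo_carrier :: "'i set \<Rightarrow> ('i \<Rightarrow> 'a::field) set" where
  "evo_carrier S = {x. \<forall>i. i \<notin> S \<longrightarrow> x i = 0}"

definition evo_mult :: "'i set \<Rightarrow> ('i \<Rightarrow> 'i \<Rightarrow> 'a::field) \<Rightarrow> ('i \<Rightarrow> 'a) \<Rightarrow> ('i \<Rightarrow> 'a) \<Rightarrow> ('i \<Rightarrow> 'a)" where
  "evo_mult S w x y = (\<lambda>j. if j \<in> S then (\<Sum>i\<in>S. x i * y i * w j i) else 0)"

definition is_subspace :: "('i \<Rightarrow> 'a::field) set \<Rightarrow> bool" where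
  "is_subspace V \<longleftrightarrow> (\<lambda>i. 0) \<in> V \<and> (\<forall>x\<in>V. \<forall>y\<in>V. (\<lambda>i. x i + y i) \<in> V)
     \<and> (\<forall>c. \<forall>x\<in>V. (\<lambda>i. c * x i) \<in> V)"

text \<open>J is an ideal of the (sub)algebra B, for the product of the evolution algebra (S,w).
(The product is commutative, so one-sided closure suffices.)\<close>
definition evo_ideal_of :: "'i set \<Rightarrow> ('i \<Rightarrow> 'i \<Rightarrow> 'a::field) \<Rightarrow> ('i \<Rightarrow> 'a) set \<Rightarrow> ('i \<Rightarrow> 'a) set \<Rightarrow> bool" where
  "evo_ideal_of S w B J \<longleftrightarrow> J \<subseteq> B \<and> is_subspace J \<and> (\<forall>x\<in>J. \<forall>y\<in>B. evo_mult S w x y \<in> J)"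

definition simple_sub :: "'i set \<Rightarrow> ('i \<Rightarrow> 'i \<Rightarrow> 'a::field) \<Rightarrow> ('i \<Rightarrow> 'a) set \<Rightarrow> bool" where
  "simple_sub S w B \<longleftrightarrow> (\<exists>x\<in>B. \<exists>y\<in>B. evo_mult S w x y \<noteq> (\<lambda>i. 0))
     \<and> (\<forall>J. evo_ideal_of S w B J \<longrightarrow> J = {\<lambda>i. 0} \<or> J = B)"

definition simple_evo :: "'i set \<Rightarrow> ('i \<Rightarrow> 'i \<Rightarrow> 'a::field) \<Rightarrow> bool" where
  "simple_evo S w \<longleftrightarrow> simple_sub S w (evo_carrier S)"

definition has_natural_basis :: "'i set \<Rightarrow> ('i \<Rightarrow> 'i \<Rightarrow> 'a::field) \<Rightarrow> ('i \<Rightarrow> 'a) set \<Rightarrow> bool" where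
  "has_natural_basis S w B \<longleftrightarrow> (\<exists>Bs. finite Bs \<and> Bs \<subseteq> B
     \<and> (\<forall>c. (\<lambda>i. \<Sum>b\<in>Bs. c b * b i) = (\<lambda>i. 0) \<longrightarrow> (\<forall>b\<in>Bs. c b = 0))
     \<and> B = {(\<lambda>i. \<Sum>b\<in>Bs. c b * b i) | c. True}
     \<and> (\<forall>b\<in>Bs. \<forall>b'\<in>Bs. b \<noteq> b' \<longrightarrow> evo_mult S w b b' = (\<lambda>i. 0)))"

definition semisimple_evo :: "'i set \<Rightarrow> ('i \<Rightarrow> 'i \<Rightarrow> 'a::field) \<Rightarrow> bool" where
  "semisimple_evo S w \<longleftrightarrow> (\<exists>\<I>. finite \<I>
     \<and> (\<forall>I\<in>\<I>. evo_ideal_of S w (evo_carrier S) I \<and> simple_sub S w I \<and> has_natural_basis S w I)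
     \<and> (\<forall>x\<in>evo_carrier S. \<exists>f. (\<forall>I\<in>\<I>. f I \<in> I) \<and> x = (\<lambda>i. \<Sum>I\<in>\<I>. f I i))
     \<and> (\<forall>f. (\<forall>I\<in>\<I>. f I \<in> I) \<and> (\<lambda>i. \<Sum>I\<in>\<I>. f I i) = (\<lambda>i. 0) \<longrightarrow> (\<forall>I\<in>\<I>. f I = (\<lambda>i. 0))))"

text \<open>Associated directed graph: edge i \<rightarrow> j iff w j i \<noteq> 0. Lengths of closed paths:
m \<ge> 1 such that there are vertices v 0, ..., v m in S with edges v k \<rightarrow> v (k+1) and v m = v 0.\<close>
definition closed_path_lengths :: "'i set \<Rightarrow> ('i \<Rightarrow> 'i \<Rightarrow> 'a::field) \<Rightarrow> nat set" where
  "closed_path_lengths S w = {m. 0 < m \<and> (\<exists>v. (\<forall>k\<le>m. v k \<in> S)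
       \<and> (\<forall>k<m. w (v (Suc k)) (v k) \<noteq> 0) \<and> v m = v 0)}"

definition period :: "'i set \<Rightarrow> ('i \<Rightarrow> 'i \<Rightarrow> 'a::field) \<Rightarrow> nat" where
  "period S w = Gcd (closed_path_lengths S w)"

definition tensor_struct :: "('i \<Rightarrow> 'i \<Rightarrow> 'a::field) \<Rightarrow> ('j \<Rightarrow> 'j \<Rightarrow> 'a) \<Rightarrow> ('i \<times> 'j \<Rightarrow> 'i \<times> 'j \<Rightarrow> 'a)" where
  "tensor_struct w1 w2 = (\<lambda>(j, q) (i, p). w1 j i * w2 q p)"

end

theory Submission
  imports Defs
begin


definition edges :: "'i set \<Rightarrow> ('i \<Rightarrow> 'i \<Rightarrow> 'a::field) \<Rightarrow> ('i \<times> 'i) set" where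
  "edges S w = {(i,k). i \<in> S \<and> k \<in> S \<and> w k i \<noteq> 0}"

definition PE :: "('i \<times> 'i) set \<Rightarrow> ('j \<times> 'j) set \<Rightarrow> (('i \<times> 'j) \<times> ('i \<times> 'j)) set" where
  "PE E1 E2 = {((i,p),(k,q)). (i,k) \<in> E1 \<and> (p,q) \<in> E2}"

lemma edges_sub: "edges S w \<subseteq> S \<times> S"
  by (auto simp: edges_def)

lemma edges_tensor: "edges (S1 \<times> S2) (tensor_struct w1 w2) = PE (edges S1 w1) (edges S2 w2)"
  by (auto simp: edges_def PE_def tensor_struct_def)

lemma PE_relpow: "((i,p),(k,q)) \<in> (PE E1 E2)^^n \<longleftrightarrow> (i,k) \<in> E1^^n \<and> (p,q) \<in> E2^^n"
proof (induction n arbitrary: k q)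
  case 0
  then show ?case by auto
next
  case (Suc n)
  show ?case
  proof
    assume "((i,p),(k,q)) \<in> (PE E1 E2)^^Suc n"
    then obtain j r where "((i,p),(j,r)) \<in> (PE E1 E2)^^n" "((j,r),(k,q)) \<in> PE E1 E2"
      by auto
    then show "(i,k) \<in> E1^^Suc n \<and> (p,q) \<in> E2^^Suc n"
      using Suc.IH by (auto simp: PE_def)
  next
    assume "(i,k) \<in> E1^^Suc n \<and> (p,q) \<in> E2^^Suc n"
    then obtain j r where "(i,j) \<in> E1^^n" "(j,k) \<in> E1" "(p,r) \<in> E2^^n" "(r,q) \<in> E2"
      by auto
    then show "((i,p),(k,q)) \<in> (PE E1 E2)^^Suc n"
      using Suc.IH[of j r] by (auto simp: PE_def)
  qed
qed

lemma cpl_eq: "closed_path_lengths S w = {m. 0 < m \<and> (\<exists>v. (v,v) \<in> (edges S w)^^m)}"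
proof (intro set_eqI iffI)
  fix m assume "m \<in> closed_path_lengths S w"
  then obtain v where "0 < m" "\<forall>k\<le>m. v k \<in> S" "\<forall>k<m. w (v (Suc k)) (v k) \<noteq> 0" "v m = v 0"
    by (auto simp: closed_path_lengths_def)
  then have "(v 0, v 0) \<in> (edges S w)^^m"
    unfolding relpow_fun_conv by (intro exI[of _ v]) (auto simp: edges_def)
  then show "m \<in> {m. 0 < m \<and> (\<exists>v. (v,v) \<in> (edges S w)^^m)}" using \<open>0 < m\<close> by auto
next
  fix m assume "m \<in> {m. 0 < m \<and> (\<exists>v. (v,v) \<in> (edges S w)^^m)}"
  then obtain a where m: "0 < m" "(a,a) \<in> (edges S w)^^m" by auto
  then obtain f where f: "f 0 = a" "f m = a" "\<forall>i<m. (f i, f (Suc i)) \<in> edges S w"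
    unfolding relpow_fun_conv by auto
  have "\<forall>k\<le>m. f k \<in> S"
  proof (intro allI impI)
    fix k assume "k \<le> m"
    show "f k \<in> S"
    proof (cases "k < m")
      case True then show ?thesis using f(3) by (auto simp: edges_def)
    next
      case False
      then have "k = m" using \<open>k \<le> m\<close> by auto
      then show ?thesis using f m(1) by (force simp: edges_def)
    qed
  qed
  then show "m \<in> closed_path_lengths S w"
    unfolding closed_path_lengths_def using f m(1) by (auto simp: edges_def intro!: exI[of _ f])
qed

lemma relpow_loop:
  assumes "(x,y) \<in> R^^a" "(y,x) \<in> R^^n"
  shows "(x,y) \<in> R^^(a + t*(n+a))"
proof (induction t)
  case 0 then show ?case using assms by simp
next
  case (Suc t)
  have eq: "a + Suc t * (n + a) = (a + t*(n+a)) + n + a" by simp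
  have "(x,y) \<in> R^^((a + t*(n+a)) + n + a)"
    using Suc assms unfolding relpow_add by blast
  then show ?case unfolding eq .
qed

lemma PE_sym:
  assumes sc1: "\<forall>x\<in>S1. \<forall>y\<in>S1. (x,y) \<in> E1^+" and sc2: "\<forall>x\<in>S2. \<forall>y\<in>S2. (x,y) \<in> E2^+"
    and E1: "E1 \<subseteq> S1 \<times> S1" and E2: "E2 \<subseteq> S2 \<times> S2"
    and uv: "(u,v) \<in> (PE E1 E2)^+"
  shows "(v,u) \<in> (PE E1 E2)^+"
proof -
  obtain i p k q where uv': "u = (i,p)" "v = (k,q)" by (cases u, cases v) auto
  obtain n where n: "n > 0" "((i,p),(k,q)) \<in> (PE E1 E2)^^n"
    using uv uv' unfolding trancl_power by blast
  then have ik: "(i,k) \<in> E1^^n" and pq: "(p,q) \<in> E2^^n" unfolding PE_relpow by auto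
  have "(i,k) \<in> E1^+" using ik n(1) trancl_power by blast
  then have iS: "i \<in> S1" "k \<in> S1" using E1 trancl_subset_Sigma by blast+
  have "(p,q) \<in> E2^+" using pq n(1) trancl_power by blast
  then have pS: "p \<in> S2" "q \<in> S2" using E2 trancl_subset_Sigma by blast+
  have "(k,i) \<in> E1^+" using sc1 iS by blast
  then obtain a where a: "a > 0" "(k,i) \<in> E1^^a" unfolding trancl_power by blast
  have "(q,p) \<in> E2^+" using sc2 pS by blast
  then obtain b where b: "b > 0" "(q,p) \<in> E2^^b" unfolding trancl_power by blast
  obtain A where A: "Suc A = a + n" using a by (cases "a+n") auto
  obtain B where B: "Suc B = b + n" using b by (cases "b+n") auto
  have e: "a + B*(n+a) = b + A*(n+b)"
  proof -
    have "a + B*(n+a) + n = Suc B * (n+a)" by simp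
    also have "\<dots> = (b+n)*(a+n)" using B by (simp add: add.commute)
    also have "\<dots> = Suc A * (n+b)" using A by (simp add: add.commute mult.commute)
    also have "\<dots> = b + A*(n+b) + n" by simp
    finally show ?thesis by simp
  qed
  have "(k,i) \<in> E1^^(a + B*(n+a))" using relpow_loop[OF a(2) ik] .
  moreover have "(q,p) \<in> E2^^(b + A*(n+b))" using relpow_loop[OF b(2) pq] .
  ultimately have "((k,q),(i,p)) \<in> (PE E1 E2)^^(a + B*(n+a))" unfolding PE_relpow e by auto
  then show ?thesis unfolding uv' trancl_power using a(1) by blast
qed



lemma relpow_closed_add:
  assumes "(k,k) \<in> R^^a" "(k,k) \<in> R^^b" shows "(k,k) \<in> R^^(a+b)"
  using assms unfolding relpow_add by blast

lemma relpow_closed_mult: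
  assumes "(k,k) \<in> R^^a" shows "(k,k) \<in> R^^(t*a)"
proof (induction t)
  case 0 then show ?case by simp
next
  case (Suc t)
  have "(k,k) \<in> R^^(a + t*a)" using relpow_closed_add[OF assms Suc] .
  then show ?case by simp
qed

lemma sc_product:
  fixes E1 :: "('i \<times> 'i) set" and E2 :: "('j \<times> 'j) set"
  assumes sc1: "\<forall>x\<in>S1. \<forall>y\<in>S1. (x,y) \<in> E1^+" and sc2: "\<forall>x\<in>S2. \<forall>y\<in>S2. (x,y) \<in> E2^+"
    and E1: "E1 \<subseteq> S1 \<times> S1" and E2: "E2 \<subseteq> S2 \<times> S2"
    and cop: "gcd (Gcd {m. 0 < m \<and> (\<exists>v. (v,v) \<in> E1^^m)}) (Gcd {m. 0 < m \<and> (\<exists>v. (v,v) \<in> E2^^m)}) = 1"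
    and i: "i \<in> S1" and k: "k \<in> S1" and p: "p \<in> S2" and q: "q \<in> S2"
  shows "\<exists>n>0. (i,k) \<in> E1^^n \<and> (p,q) \<in> E2^^n"
proof -
  define M1 where "M1 = {m. (k,k) \<in> E1^^m}"
  define M2 where "M2 = {m. (q,q) \<in> E2^^m}"
  have M1_add: "a + b \<in> M1" if "a \<in> M1" "b \<in> M1" for a b
    using that relpow_closed_add unfolding M1_def by fast
  have M2_add: "a + b \<in> M2" if "a \<in> M2" "b \<in> M2" for a b
    using that relpow_closed_add unfolding M2_def by fast
  have M1_mult: "t * a \<in> M1" if "a \<in> M1" for a t
    using that relpow_closed_mult unfolding M1_def by fast
  have M2_mult: "t * a \<in> M2" if "a \<in> M2" for a t
    using that relpow_closed_mult unfolding M2_def by fast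
  have M1_0: "0 \<in> M1" and M2_0: "0 \<in> M2" unfolding M1_def M2_def by auto
  define G where "G = {x::int. \<exists>a\<in>M1. \<exists>a'\<in>M1. \<exists>b\<in>M2. \<exists>b'\<in>M2. x = int a - int a' + int b - int b'}"
  have G_add: "x + y \<in> G" if xG: "x \<in> G" and yG: "y \<in> G" for x y
  proof -
    obtain a a' b b' where "a\<in>M1" "a'\<in>M1" "b\<in>M2" "b'\<in>M2" "x = int a - int a' + int b - int b'"
      using xG unfolding G_def by blast
    moreover obtain c c' d d' where "c\<in>M1" "c'\<in>M1" "d\<in>M2" "d'\<in>M2" "y = int c - int c' + int d - int d'"
      using yG unfolding G_def by blast
    ultimately show ?thesis unfolding G_def
      by (intro CollectI bexI[of _ "a+c"] bexI[of _ "a'+c'"] bexI[of _ "b+d"] bexI[of _ "b'+d'"])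
         (auto intro: M1_add M2_add)
  qed
  have G_neg: "- x \<in> G" if xG: "x \<in> G" for x
  proof -
    obtain a a' b b' where "a\<in>M1" "a'\<in>M1" "b\<in>M2" "b'\<in>M2" "x = int a - int a' + int b - int b'"
      using xG unfolding G_def by blast
    then show ?thesis unfolding G_def
      by (intro CollectI bexI[of _ "a'"] bexI[of _ "a"] bexI[of _ "b'"] bexI[of _ "b"]) auto
  qed
  have G_0: "0 \<in> G" unfolding G_def using M1_0 M2_0 by force
  have G_natmult: "int t * x \<in> G" if "x \<in> G" for x t
  proof (induction t)
    case 0 then show ?case using G_0 by simp
  next
    case (Suc t)
    have "x + int t * x \<in> G" using G_add[OF that Suc] .
    then show ?case by (simp add: algebra_simps)
  qed
  have G_mult: "t * x \<in> G" if "x \<in> G" for x t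
  proof (cases "t \<ge> 0")
    case True
    then have "t = int (nat t)" by simp
    then show ?thesis using G_natmult[OF that, of "nat t"] by metis
  next
    case False
    then have "t = - int (nat (-t))" by simp
    then have "t * x = - (int (nat (-t)) * x)" by (metis mult_minus_left)
    then show ?thesis using G_neg[OF G_natmult[OF that, of "nat (-t)"]] by simp
  qed
  define C1 where "C1 = {m. 0 < m \<and> (\<exists>v. (v,v) \<in> E1^^m)}"
  define C2 where "C2 = {m. 0 < m \<and> (\<exists>v. (v,v) \<in> E2^^m)}"
  have C1G: "int c \<in> G" if cC: "c \<in> C1" for c
  proof -
    obtain v where v: "0 < c" "(v,v) \<in> E1^^c" using cC unfolding C1_def by auto
    then have "(v,v) \<in> E1^+" unfolding trancl_power by blast
    then have vS: "v \<in> S1" using E1 trancl_subset_Sigma by blast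
    have "(k,v) \<in> E1^+" using sc1 k vS by blast
    then obtain a where a: "(k,v) \<in> E1^^a" unfolding trancl_power by blast
    have "(v,k) \<in> E1^+" using sc1 k vS by blast
    then obtain b where b: "(v,k) \<in> E1^^b" unfolding trancl_power by blast
    have "a + b \<in> M1" using a b unfolding M1_def mem_Collect_eq relpow_add by blast
    moreover have "a + c + b \<in> M1" using a b v(2) unfolding M1_def mem_Collect_eq relpow_add by blast
    ultimately show ?thesis unfolding G_def using M2_0
      by (intro CollectI bexI[of _ "a+c+b"] bexI[of _ "a+b"] bexI[of _ 0]) auto
  qed
  have C2G: "int c \<in> G" if cC: "c \<in> C2" for c
  proof -
    obtain v where v: "0 < c" "(v,v) \<in> E2^^c" using cC unfolding C2_def by auto
    then have "(v,v) \<in> E2^+" unfolding trancl_power by blast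
    then have vS: "v \<in> S2" using E2 trancl_subset_Sigma by blast
    have "(q,v) \<in> E2^+" using sc2 q vS by blast
    then obtain a where a: "(q,v) \<in> E2^^a" unfolding trancl_power by blast
    have "(v,q) \<in> E2^+" using sc2 q vS by blast
    then obtain b where b: "(v,q) \<in> E2^^b" unfolding trancl_power by blast
    have "a + b \<in> M2" using a b unfolding M2_def mem_Collect_eq relpow_add by blast
    moreover have "a + c + b \<in> M2" using a b v(2) unfolding M2_def mem_Collect_eq relpow_add by blast
    ultimately show ?thesis unfolding G_def using M1_0
      by (intro CollectI bexI[of _ 0] bexI[of _ 0] bexI[of _ "a+c+b"] bexI[of _ "a+b"]) auto
  qed
  have "(k,k) \<in> E1^+" using sc1 k by blast
  then obtain c1 where c1: "c1 > 0" "(k,k) \<in> E1^^c1" unfolding trancl_power by blast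
  have "(q,q) \<in> E2^+" using sc2 q by blast
  then obtain c2 where c2: "c2 > 0" "(q,q) \<in> E2^^c2" unfolding trancl_power by blast
  have c1C: "c1 \<in> C1" using c1 unfolding C1_def by blast
  have ex: "\<exists>g::nat. g > 0 \<and> int g \<in> G" using c1(1) C1G[OF c1C] by blast
  define g where "g = (LEAST g::nat. g > 0 \<and> int g \<in> G)"
  have g: "g > 0" "int g \<in> G" using LeastI_ex[OF ex] unfolding g_def by auto
  have gmin: "h \<ge> g" if "h > 0" "int h \<in> G" for h
    unfolding g_def by (rule Least_le) (use that in auto)
  have gdvd: "int g dvd x" if "x \<in> G" for x
  proof -
    have "x + (- (x div int g)) * int g \<in> G" using G_add[OF that G_mult[OF g(2)]] by blast
    moreover have "x + (- (x div int g)) * int g = x mod int g"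
      by (simp add: algebra_simps minus_div_mult_eq_mod)
    ultimately have r: "x mod int g \<in> G" by simp
    have r0: "0 \<le> x mod int g" "x mod int g < int g" using g(1) by auto
    show ?thesis
    proof (rule ccontr)
      assume "\<not> int g dvd x"
      then have "x mod int g \<noteq> 0" by (simp add: dvd_eq_mod_eq_0)
      then have "nat (x mod int g) > 0" using r0 by auto
      moreover have "int (nat (x mod int g)) \<in> G" using r r0 by simp
      ultimately have "nat (x mod int g) \<ge> g" using gmin by blast
      then show False using r0 by linarith
    qed
  qed
  have "g dvd Gcd C1"
    proof (rule Gcd_greatest)
    fix b assume "b \<in> C1"
    then have "int g dvd int b" using gdvd C1G by blast
    then show "g dvd b" by simp
  qed
  moreover have "g dvd Gcd C2"
    proof (rule Gcd_greatest)
    fix b assume "b \<in> C2"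
    then have "int g dvd int b" using gdvd C2G by blast
    then show "g dvd b" by simp
  qed
  ultimately have "g dvd gcd (Gcd C1) (Gcd C2)" by (rule gcd_greatest)
  moreover have "gcd (Gcd C1) (Gcd C2) = 1" using cop unfolding C1_def C2_def .
  ultimately have "g dvd 1" by simp
  then have g1: "g = 1" by simp
  obtain r where r: "r > 0" "(i,k) \<in> E1^^r" using sc1 i k unfolding trancl_power by blast
  obtain s where s: "s > 0" "(p,q) \<in> E2^^s" using sc2 p q unfolding trancl_power by blast
  have "(int s - int r) * int g \<in> G" using G_mult[OF g(2)] .
  then have "int s - int r \<in> G" using g1 by simp
  then obtain a a' b b' where ab: "a\<in>M1" "a'\<in>M1" "b\<in>M2" "b'\<in>M2"
      "int s - int r = int a - int a' + int b - int b'"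
    unfolding G_def by blast
  then have eq: "r + a + b = s + a' + b'" by linarith
  have "c1 * c2 > 0" using c1 c2 by simp
  then obtain N where N: "c1 * c2 = Suc N" by (cases "c1*c2") auto
  have c1M: "c1 \<in> M1" using c1 unfolding M1_def by simp
  have c2M: "c2 \<in> M2" using c2 unfolding M2_def by simp
  have "(c2*b) * c1 \<in> M1" using M1_mult[OF c1M] .
  then have Nb: "Suc N * b \<in> M1" unfolding N[symmetric] by (simp add: ac_simps)
  have "(c1*a') * c2 \<in> M2" using M2_mult[OF c2M] .
  then have Na: "Suc N * a' \<in> M2" unfolding N[symmetric] by (simp add: ac_simps)
  define m1 where "m1 = a + Suc N * b + N * a'"
  define m2 where "m2 = Suc N * a' + b' + N * b"
  have m1M: "m1 \<in> M1" unfolding m1_def using ab Nb M1_mult M1_add by blast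
  have m2M: "m2 \<in> M2" unfolding m2_def using ab Na M2_mult M2_add by blast
  have e2: "r + m1 = s + m2" unfolding m1_def m2_def using eq by simp
  have "(i,k) \<in> E1^^(r + m1)" using r(2) m1M unfolding M1_def mem_Collect_eq relpow_add by blast
  moreover have "(p,q) \<in> E2^^(s + m2)" using s(2) m2M unfolding M2_def mem_Collect_eq relpow_add by blast
  ultimately show ?thesis using e2 r(1) by (intro exI[of _ "r+m1"]) auto
qed



definition sub :: "'i set \<Rightarrow> ('i \<Rightarrow> 'a::field) set" where
  "sub C = {x. \<forall>i. i \<notin> C \<longrightarrow> x i = 0}"
definition unitv :: "'i \<Rightarrow> 'i \<Rightarrow> 'a::field" where
  "unitv u = (\<lambda>i. if i = u then 1 else 0)"
definition colv :: "'i set \<Rightarrow> ('i \<Rightarrow> 'i \<Rightarrow> 'a::field) \<Rightarrow> 'i \<Rightarrow> 'i \<Rightarrow> 'a" where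
  "colv S w u = (\<lambda>j. if j \<in> S then w j u else 0)"
definition Wm :: "'i set \<Rightarrow> ('i \<Rightarrow> 'i \<Rightarrow> 'a::field) \<Rightarrow> ('i \<Rightarrow> 'a) \<Rightarrow> 'i \<Rightarrow> 'a" where
  "Wm S w c = (\<lambda>j. if j \<in> S then (\<Sum>i\<in>S. c i * w j i) else 0)"

lemma carrier_sub: "evo_carrier S = sub S"
  by (simp add: evo_carrier_def sub_def)

lemma mult_Wm: "evo_mult S w x y = Wm S w (\<lambda>i. x i * y i)"
  by (simp add: evo_mult_def Wm_def)

lemma sub_mono: "C \<subseteq> D \<Longrightarrow> sub C \<subseteq> sub D"
  by (auto simp: sub_def)

lemma subspace_sub: "is_subspace (sub C)"
  by (auto simp: is_subspace_def sub_def)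

lemma unitv_sub: "k \<in> C \<Longrightarrow> unitv k \<in> sub C"
  by (auto simp: sub_def unitv_def)

lemma unitv_sub_iff: "unitv k \<in> sub C \<longleftrightarrow> k \<in> C"
  by (auto simp: sub_def unitv_def)

lemma subspace_sum:
  assumes V: "is_subspace V" and fin: "finite A" and f: "\<forall>a\<in>A. f a \<in> V"
  shows "(\<lambda>i. \<Sum>a\<in>A. f a i) \<in> V"
  using fin f
proof (induction A rule: finite_induct)
  case empty then show ?case using V by (simp add: is_subspace_def)
next
  case (insert a A)
  have fa: "f a \<in> V" using insert.prems by simp
  have IH: "(\<lambda>i. \<Sum>a\<in>A. f a i) \<in> V" using insert.IH insert.prems by simp
  have add: "\<And>x y. x \<in> V \<Longrightarrow> y \<in> V \<Longrightarrow> (\<lambda>i. x i + y i) \<in> V" using V unfolding is_subspace_def by blast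
  have "(\<lambda>i. f a i + (\<Sum>a\<in>A. f a i)) \<in> V" using add[OF fa IH] by simp
  then show ?case using insert by simp
qed

lemma subspace_scale: "is_subspace V \<Longrightarrow> x \<in> V \<Longrightarrow> (\<lambda>i. c * x i) \<in> V"
  by (simp add: is_subspace_def)

lemma sub_expand:
  assumes "finite C" "x \<in> sub C"
  shows "x = (\<lambda>j. \<Sum>k\<in>C. x k * unitv k j)"
proof
  fix j
  have "(\<Sum>k\<in>C. x k * unitv k j) = (\<Sum>k\<in>C. if k = j then x j else 0)"
    by (rule sum.cong) (auto simp: unitv_def)
  also have "\<dots> = x j" using assms by (auto simp: sub_def)
  finally show "x j = (\<Sum>k\<in>C. x k * unitv k j)" by simp
qed

lemma Wm_sub:
  assumes fin: "finite S" and CS: "C \<subseteq> S" and c: "c \<in> sub C"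
  shows "Wm S w c = (\<lambda>j. \<Sum>m\<in>C. c m * colv S w m j)"
proof
  fix j
  show "Wm S w c j = (\<Sum>m\<in>C. c m * colv S w m j)"
  proof (cases "j \<in> S")
    case True
    have "(\<Sum>i\<in>S. c i * w j i) = (\<Sum>i\<in>C. c i * w j i)"
      by (rule sum.mono_neutral_right) (use fin CS c in \<open>auto simp: sub_def\<close>)
    then show ?thesis using True by (simp add: Wm_def colv_def)
  qed (simp add: Wm_def colv_def)
qed

lemma mult_unit:
  assumes fin: "finite S" and u: "u \<in> S"
  shows "evo_mult S w x (unitv u) = (\<lambda>j. x u * colv S w u j)"
proof
  fix j
  show "evo_mult S w x (unitv u) j = x u * colv S w u j"
  proof (cases "j \<in> S")
    case True
    have "(\<Sum>i\<in>S. x i * unitv u i * w j i) = (\<Sum>i\<in>S. if i = u then x u * w j u else 0)"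
      by (rule sum.cong) (auto simp: unitv_def)
    also have "\<dots> = x u * w j u" using u fin by simp
    finally show ?thesis using True by (simp add: evo_mult_def colv_def)
  qed (simp add: evo_mult_def colv_def)
qed

lemma simple_surj:
  fixes S :: "'i set" and w :: "'i \<Rightarrow> 'i \<Rightarrow> 'a::field"
  assumes fin: "finite S" and s: "simple_evo S w" and x: "x \<in> evo_carrier S"
  shows "\<exists>c\<in>evo_carrier S. x = Wm S w c"
proof -
  define V where "V = {Wm S w c | c. c \<in> evo_carrier S}"
  have Wm_car: "Wm S w c \<in> evo_carrier S" for c by (simp add: Wm_def evo_carrier_def)
  have id: "evo_ideal_of S w (evo_carrier S) V"
    unfolding evo_ideal_of_def is_subspace_def
  proof (intro conjI ballI allI)
    show "V \<subseteq> evo_carrier S" using Wm_car V_def by auto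
    have "Wm S w (\<lambda>i. 0) = (\<lambda>i. (0::'a))" by (simp add: Wm_def fun_eq_iff)
    moreover have "(\<lambda>i. (0::'a)) \<in> evo_carrier S" by (simp add: evo_carrier_def)
    ultimately show "(\<lambda>i. 0) \<in> V" unfolding V_def by (metis (mono_tags, lifting) mem_Collect_eq)
  next
    fix y z assume "y \<in> V" "z \<in> V"
    then obtain c d where cd: "c \<in> evo_carrier S" "d \<in> evo_carrier S" "y = Wm S w c" "z = Wm S w d"
      unfolding V_def by blast
    have "(\<lambda>i. y i + z i) = Wm S w (\<lambda>i. c i + d i)"
      using cd by (auto simp: Wm_def sum.distrib algebra_simps)
    moreover have "(\<lambda>i. c i + d i) \<in> evo_carrier S" using cd by (simp add: evo_carrier_def)
    ultimately show "(\<lambda>i. y i + z i) \<in> V" unfolding V_def by blast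
  next
    fix a y assume "y \<in> V"
    then obtain c where cd: "c \<in> evo_carrier S" "y = Wm S w c" unfolding V_def by blast
    have "(\<lambda>i. a * y i) = Wm S w (\<lambda>i. a * c i)"
      using cd by (auto simp: Wm_def sum_distrib_left algebra_simps)
    moreover have "(\<lambda>i. a * c i) \<in> evo_carrier S" using cd by (simp add: evo_carrier_def)
    ultimately show "(\<lambda>i. a * y i) \<in> V" unfolding V_def by blast
  next
    fix y z :: "'i \<Rightarrow> 'a" assume y: "y \<in> V" and z: "z \<in> evo_carrier S"
    then have "(\<lambda>i. y i * z i) \<in> evo_carrier S" by (simp add: evo_carrier_def)
    then show "evo_mult S w y z \<in> V" unfolding V_def mult_Wm by blast
  qed
  from s obtain y z where yz: "y \<in> evo_carrier S" "z \<in> evo_carrier S" "evo_mult S w y z \<noteq> (\<lambda>i. 0)"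
    and all: "\<forall>J. evo_ideal_of S w (evo_carrier S) J \<longrightarrow> J = {\<lambda>i. 0} \<or> J = evo_carrier S"
    unfolding simple_evo_def simple_sub_def by blast
  have "(\<lambda>i. y i * z i) \<in> evo_carrier S" using yz by (simp add: evo_carrier_def)
  then have "evo_mult S w y z \<in> V" unfolding V_def mult_Wm by blast
  then have "V \<noteq> {\<lambda>i. 0}" using yz(3) by blast
  then have "V = evo_carrier S" using all id by blast
  then show ?thesis using x unfolding V_def by blast
qed

lemma simple_sc:
  fixes S :: "'i set" and w :: "'i \<Rightarrow> 'i \<Rightarrow> 'a::field"
  assumes fin: "finite S" and s: "simple_evo S w" and i: "i \<in> S" and k: "k \<in> S"
  shows "(i,k) \<in> (edges S w)^+"
proof -
  from s obtain y z where yz: "y \<in> evo_carrier S" "z \<in> evo_carrier S" "evo_mult S w y z \<noteq> (\<lambda>i. 0)"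
    and all: "\<forall>J. evo_ideal_of S w (evo_carrier S) J \<longrightarrow> J = {\<lambda>i. 0} \<or> J = evo_carrier S"
    unfolding simple_evo_def simple_sub_def by blast
  define T where "T = {k. (i,k) \<in> (edges S w)^+}"
  have TS: "T \<subseteq> S"
  proof
    fix t assume "t \<in> T"
    then have "(i,t) \<in> S \<times> S" using trancl_subset_Sigma[OF edges_sub] unfolding T_def by blast
    then show "t \<in> S" by simp
  qed
  have idT: "evo_ideal_of S w (evo_carrier S) (sub T)"
    unfolding evo_ideal_of_def
  proof (intro conjI ballI)
    show "sub T \<subseteq> evo_carrier S" using sub_mono[OF TS] unfolding carrier_sub .
    show "is_subspace (sub T)" by (rule subspace_sub)
  next
    fix x y :: "'i \<Rightarrow> 'a" assume x: "x \<in> sub T" and y: "y \<in> evo_carrier S"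
    show "evo_mult S w x y \<in> sub T" unfolding sub_def
    proof (intro CollectI allI impI)
      fix j assume j: "j \<notin> T"
      show "evo_mult S w x y j = 0"
      proof (cases "j \<in> S")
        case True
        have "(\<Sum>m\<in>S. x m * y m * w j m) = 0"
        proof (rule sum.neutral, intro ballI)
          fix m assume m: "m \<in> S"
          show "x m * y m * w j m = 0"
          proof (cases "m \<in> T")
            case True
            have "w j m = 0"
            proof (rule ccontr)
              assume "w j m \<noteq> 0"
              then have "(m,j) \<in> edges S w" using m \<open>j \<in> S\<close> by (simp add: edges_def)
              moreover have "(i,m) \<in> (edges S w)^+" using True unfolding T_def by simp
              ultimately have "(i,j) \<in> (edges S w)^+" by (meson trancl_into_trancl)
              then have "j \<in> T" unfolding T_def by simp
              then show False using j by simp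
            qed
            then show ?thesis by simp
          next
            case False then show ?thesis using x by (simp add: sub_def)
          qed
        qed
        then show ?thesis using True by (simp add: evo_mult_def)
      qed (simp add: evo_mult_def)
    qed
  qed
  show ?thesis
  proof (cases "sub T = (evo_carrier S :: ('i \<Rightarrow> 'a) set)")
    case True
    have "unitv k \<in> evo_carrier S" using k unitv_sub carrier_sub by metis
    then have "k \<in> T" using True unitv_sub_iff by metis
    then show ?thesis unfolding T_def by simp
  next
    case False
    then have "sub T = {\<lambda>i. 0::'a}" using all idT by blast
    have T0: "T = {}"
    proof (rule ccontr)
      assume "T \<noteq> {}"
      then obtain t where t: "t \<in> T" by blast
      then have "unitv t \<in> sub T" by (rule unitv_sub)
      then have "unitv t = (\<lambda>i. 0::'a)" using \<open>sub T = {\<lambda>i. 0::'a}\<close> by blast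
      then have "unitv t t = (0::'a)" by simp
      then show False by (simp add: unitv_def)
    qed
    have wi: "w j i = 0" if "j \<in> S" for j
    proof (rule ccontr)
      assume "w j i \<noteq> 0"
      then have "(i,j) \<in> edges S w" using i that by (simp add: edges_def)
      then have "j \<in> T" unfolding T_def by blast
      then show False using T0 by simp
    qed
    have mult0: "evo_mult S w x y' = (\<lambda>j. 0)" if "x \<in> sub {i}" for x y' :: "'i \<Rightarrow> 'a"
    proof
      fix j
      show "evo_mult S w x y' j = 0"
      proof (cases "j \<in> S")
        case True
        have "(\<Sum>m\<in>S. x m * y' m * w j m) = 0"
        proof (rule sum.neutral, intro ballI)
          fix m assume "m \<in> S"
          show "x m * y' m * w j m = 0"
          proof (cases "m = i")
            case True then show ?thesis using wi[OF \<open>j \<in> S\<close>] by simp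
          next
            case False then show ?thesis using that by (simp add: sub_def)
          qed
        qed
        then show ?thesis using True by (simp add: evo_mult_def)
      qed (simp add: evo_mult_def)
    qed
    have idi: "evo_ideal_of S w (evo_carrier S) (sub {i})"
      unfolding evo_ideal_of_def
    proof (intro conjI ballI)
      show "sub {i} \<subseteq> evo_carrier S" using sub_mono[of "{i}" S] i carrier_sub by auto
      show "is_subspace (sub {i})" by (rule subspace_sub)
    next
      fix x y' :: "'i \<Rightarrow> 'a" assume "x \<in> sub {i}"
      then show "evo_mult S w x y' \<in> sub {i}" using mult0 by (simp add: sub_def)
    qed
    have ui: "unitv i \<in> (sub {i} :: ('i \<Rightarrow> 'a) set)" by (simp add: unitv_sub)
    have "sub {i} \<noteq> {\<lambda>j. 0::'a}"
    proof
      assume "sub {i} = {\<lambda>j. 0::'a}"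
      then have "unitv i = (\<lambda>j. 0::'a)" using ui by simp
      then have "unitv i i = (0::'a)" by simp
      then show False by (simp add: unitv_def)
    qed
    then have si: "sub {i} = (evo_carrier S :: ('i \<Rightarrow> 'a) set)" using all idi by blast
    have "y \<in> sub {i}" using yz(1) unfolding si .
    then have "evo_mult S w y z = (\<lambda>j. 0)" by (rule mult0)
    then show ?thesis using yz(3) by blast
  qed
qed



lemma inv_cancel_fun: "(a::'a::field) \<noteq> 0 \<Longrightarrow> (\<lambda>i. inverse a * (a * f i)) = f"
  by (simp add: fun_eq_iff mult.assoc[symmetric])

lemma comp_simple:
  fixes S :: "'i set" and w :: "'i \<Rightarrow> 'i \<Rightarrow> 'a::field"
  assumes fin: "finite S" and CS: "C \<subseteq> S" and Cne: "C \<noteq> {}"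
    and closed: "\<forall>i\<in>C. \<forall>j\<in>S. w j i \<noteq> 0 \<longrightarrow> j \<in> C"
    and sc: "\<forall>i\<in>C. \<forall>k\<in>C. (i,k) \<in> (edges S w)^+"
    and span: "\<forall>k\<in>C. \<exists>c\<in>sub C. unitv k = Wm S w c"
  shows "evo_ideal_of S w (evo_carrier S) (sub C) \<and> simple_sub S w (sub C) \<and> has_natural_basis S w (sub C)"
proof (intro conjI)
  have finC: "finite C" using fin CS finite_subset by blast
  show "evo_ideal_of S w (evo_carrier S) (sub C)"
    unfolding evo_ideal_of_def
  proof (intro conjI ballI)
    show "sub C \<subseteq> evo_carrier S" using sub_mono[OF CS] unfolding carrier_sub .
    show "is_subspace (sub C)" by (rule subspace_sub)
  next
    fix x y :: "'i \<Rightarrow> 'a" assume x: "x \<in> sub C" and y: "y \<in> evo_carrier S"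
    show "evo_mult S w x y \<in> sub C" unfolding sub_def
    proof (intro CollectI allI impI)
      fix j assume j: "j \<notin> C"
      show "evo_mult S w x y j = 0"
      proof (cases "j \<in> S")
        case True
        have "(\<Sum>m\<in>S. x m * y m * w j m) = 0"
        proof (rule sum.neutral, intro ballI)
          fix m assume m: "m \<in> S"
          show "x m * y m * w j m = 0"
          proof (cases "m \<in> C")
            case True
            then have "w j m = 0" using closed j \<open>j \<in> S\<close> by blast
            then show ?thesis by simp
          next
            case False then show ?thesis using x by (simp add: sub_def)
          qed
        qed
        then show ?thesis using True by (simp add: evo_mult_def)
      qed (simp add: evo_mult_def)
    qed
  qed
  show "simple_sub S w (sub C)" unfolding simple_sub_def
  proof (intro conjI allI impI)
    obtain u where u: "u \<in> C" using Cne by blast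
    have "(u,u) \<in> (edges S w)^+" using sc u by blast
    then obtain v where "(u,v) \<in> edges S w" by (auto elim: converse_tranclE)
    then have v: "v \<in> S" "w v u \<noteq> 0" "u \<in> S" by (auto simp: edges_def)
    have "evo_mult S w (unitv u) (unitv u) = (\<lambda>j. unitv u u * colv S w u j)"
      by (rule mult_unit[OF fin \<open>u \<in> S\<close>])
    then have "evo_mult S w (unitv u) (unitv u) v = w v u"
      using v by (simp add: colv_def unitv_def)
    then have "evo_mult S w (unitv u) (unitv u) \<noteq> (\<lambda>i. 0)" using v by auto
    then show "\<exists>x\<in>sub C. \<exists>y\<in>sub C. evo_mult S w x y \<noteq> (\<lambda>i. 0)" using unitv_sub[OF u] by blast
  next
    fix J :: "('i \<Rightarrow> 'a) set" assume J: "evo_ideal_of S w (sub C) J"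
    then have JC: "J \<subseteq> sub C" and Jsub: "is_subspace J"
      and Jmul: "\<forall>x\<in>J. \<forall>y\<in>sub C. evo_mult S w x y \<in> J"
      unfolding evo_ideal_of_def by auto
    show "J = {\<lambda>i. 0} \<or> J = sub C"
    proof (cases "J \<subseteq> {\<lambda>i. 0}")
      case True
      moreover have "(\<lambda>i. 0) \<in> J" using Jsub by (simp add: is_subspace_def)
      ultimately show ?thesis by blast
    next
      case False
      then obtain x where x: "x \<in> J" "x \<noteq> (\<lambda>i. 0)" by blast
      then obtain u where xu: "x u \<noteq> 0" by auto
      have uC: "u \<in> C" using JC x(1) xu by (auto simp: sub_def)
      have uS: "u \<in> S" using uC CS by blast
      have colu: "colv S w u \<in> J"
      proof -
        have "evo_mult S w x (unitv u) \<in> J" using Jmul x(1) unitv_sub[OF uC] by blast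
        moreover have "evo_mult S w x (unitv u) = (\<lambda>j. x u * colv S w u j)" by (rule mult_unit[OF fin uS])
        ultimately have "(\<lambda>j. x u * colv S w u j) \<in> J" by simp
        then have "(\<lambda>i. inverse (x u) * (x u * colv S w u i)) \<in> J" by (rule subspace_scale[OF Jsub])
        then show ?thesis by (simp only: inv_cancel_fun[OF xu])
      qed
      have stp: "colv S w k \<in> J" if mC: "m \<in> C" and mJ: "colv S w m \<in> J" and mk: "(m,k) \<in> edges S w" for m k
      proof -
        have kS: "k \<in> S" and wkm: "w k m \<noteq> 0" using mk by (auto simp: edges_def)
        have kC: "k \<in> C" using closed mC kS wkm by blast
        have "evo_mult S w (colv S w m) (unitv k) \<in> J" using Jmul mJ unitv_sub[OF kC] by blast
        moreover have "evo_mult S w (colv S w m) (unitv k) = (\<lambda>j. colv S w m k * colv S w k j)" by (rule mult_unit[OF fin kS])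
        ultimately have "(\<lambda>j. colv S w m k * colv S w k j) \<in> J" by simp
        then have "(\<lambda>j. w k m * colv S w k j) \<in> J" using kS by (simp add: colv_def)
        then have "(\<lambda>i. inverse (w k m) * (w k m * colv S w k i)) \<in> J" by (rule subspace_scale[OF Jsub])
        then show ?thesis by (simp only: inv_cancel_fun[OF wkm])
      qed
      have reach: "k \<in> C \<and> colv S w k \<in> J" if "(u,k) \<in> (edges S w)^+" for k
        using that
      proof (induction rule: trancl_induct)
        case (base y)
        then have "y \<in> S" "w y u \<noteq> 0" by (auto simp: edges_def)
        then show ?case using closed uC stp[OF uC colu base] by blast
      next
        case (step y z)
        then have "z \<in> S" "w z y \<noteq> 0" by (auto simp: edges_def)
        then show ?case using closed step.IH stp[of y z] step.hyps(2) by blast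
      qed
      have colJ: "colv S w k \<in> J" if "k \<in> C" for k using reach sc uC that by blast
      have unitJ: "unitv k \<in> J" if kC: "k \<in> C" for k
      proof -
        obtain c where c: "c \<in> sub C" "unitv k = Wm S w c" using span kC by blast
        have "Wm S w c = (\<lambda>j. \<Sum>m\<in>C. c m * colv S w m j)" by (rule Wm_sub[OF fin CS c(1)])
        moreover have "(\<lambda>j. \<Sum>m\<in>C. c m * colv S w m j) \<in> J"
          using subspace_sum[OF Jsub finC, of "\<lambda>m j. c m * colv S w m j"]
            subspace_scale[OF Jsub colJ] by auto
        ultimately show ?thesis using c(2) by simp
      qed
      have "sub C \<subseteq> J"
      proof
        fix y :: "'i \<Rightarrow> 'a" assume y: "y \<in> sub C"
        have "(\<lambda>j. \<Sum>k\<in>C. y k * unitv k j) \<in> J"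
          using subspace_sum[OF Jsub finC, of "\<lambda>k j. y k * unitv k j"]
            subspace_scale[OF Jsub unitJ] by auto
        then show "y \<in> J" using sub_expand[OF finC y] by simp
      qed
      then show ?thesis using JC by blast
    qed
  qed
  have inj: "inj_on (unitv :: 'i \<Rightarrow> 'i \<Rightarrow> 'a) C"
  proof
    fix a b assume "a \<in> C" "b \<in> C" "(unitv a :: 'i \<Rightarrow> 'a) = unitv b"
    then have "(unitv a a :: 'a) = unitv b a" by simp
    then show "a = b" by (simp add: unitv_def split: if_splits)
  qed
  have sumr: "(\<Sum>b\<in>unitv ` C. c b * b i) = (\<Sum>m\<in>C. c (unitv m) * (unitv m i :: 'a))" for c i
    by (simp add: sum.reindex[OF inj])
  show "has_natural_basis S w (sub C)" unfolding has_natural_basis_def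
  proof (intro exI[of _ "unitv ` C"] conjI)
    show "finite (unitv ` C)" using finC by simp
    show "unitv ` C \<subseteq> sub C" by (rule image_subsetI) (rule unitv_sub)
    show "\<forall>c. (\<lambda>i. \<Sum>b\<in>(unitv ` C :: ('i \<Rightarrow> 'a) set). c b * b i) = (\<lambda>i. 0) \<longrightarrow> (\<forall>b\<in>unitv ` C. c b = 0)"
    proof (intro allI impI ballI)
      fix c :: "('i \<Rightarrow> 'a) \<Rightarrow> 'a" and b :: "'i \<Rightarrow> 'a"
      assume h: "(\<lambda>i. \<Sum>b\<in>unitv ` C. c b * b i) = (\<lambda>i. 0)" and b: "b \<in> unitv ` C"
      then obtain k where k: "k \<in> C" "b = unitv k" by blast
      have "(\<Sum>b\<in>unitv ` C. c b * b k) = 0" using fun_cong[OF h, of k] by simp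
      moreover have "(\<Sum>m\<in>C. c (unitv m) * unitv m k) = (\<Sum>m\<in>C. if m = k then c (unitv k) else 0)"
        by (rule sum.cong) (auto simp: unitv_def)
      moreover have "(\<Sum>m\<in>C. if m = k then c (unitv k) else 0) = c (unitv k)" using k finC by simp
      ultimately show "c b = 0" using k sumr by simp
    qed
    show "sub C = {(\<lambda>i. \<Sum>b\<in>(unitv ` C :: ('i \<Rightarrow> 'a) set). c b * b i) | c. True}"
    proof (intro set_eqI iffI)
      fix x :: "'i \<Rightarrow> 'a" assume x: "x \<in> sub C"
      have "(\<lambda>i. \<Sum>b\<in>(unitv ` C :: ('i \<Rightarrow> 'a) set). x (inv_into C unitv b) * b i) = (\<lambda>i. \<Sum>m\<in>C. x m * unitv m i)"
        using sumr inv_into_f_f[OF inj] by simp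
      then have xe: "x = (\<lambda>i. \<Sum>b\<in>unitv ` C. x (inv_into C unitv b) * b i)"
        using sub_expand[OF finC x] by simp
      show "x \<in> {(\<lambda>i. \<Sum>b\<in>(unitv ` C :: ('i \<Rightarrow> 'a) set). c b * b i) | c. True}"
        by (rule CollectI, rule exI[of _ "\<lambda>b. x (inv_into C unitv b)"]) (use xe in simp)
    next
      fix x :: "'i \<Rightarrow> 'a" assume "x \<in> {(\<lambda>i. \<Sum>b\<in>(unitv ` C :: ('i \<Rightarrow> 'a) set). c b * b i) | c. True}"
      then obtain c where c: "x = (\<lambda>i. \<Sum>b\<in>unitv ` C. c b * b i)" by blast
      show "x \<in> sub C" unfolding sub_def
      proof (intro CollectI allI impI)
        fix i assume i: "i \<notin> C"
        have "(\<Sum>m\<in>C. c (unitv m) * (unitv m i :: 'a)) = 0"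
          by (rule sum.neutral) (use i in \<open>auto simp: unitv_def\<close>)
        then show "x i = 0" using c sumr by simp
      qed
    qed
    show "\<forall>b\<in>(unitv ` C :: ('i \<Rightarrow> 'a) set). \<forall>b'\<in>unitv ` C. b \<noteq> b' \<longrightarrow> evo_mult S w b b' = (\<lambda>i. 0)"
    proof (intro ballI impI)
      fix b b' :: "'i \<Rightarrow> 'a" assume b: "b \<in> unitv ` C" and b': "b' \<in> unitv ` C" and ne: "b \<noteq> b'"
      obtain a a' where aa: "a \<in> C" "a' \<in> C" "b = unitv a" "b' = unitv a'" using b b' by blast
      then have "a \<noteq> a'" using ne by blast
      have "a' \<in> S" using aa CS by blast
      have "evo_mult S w b b' = (\<lambda>j. unitv a a' * colv S w a' j)"
        unfolding aa by (rule mult_unit[OF fin \<open>a' \<in> S\<close>])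
      then show "evo_mult S w b b' = (\<lambda>i. 0)" using \<open>a \<noteq> a'\<close> by (simp add: unitv_def)
    qed
  qed
qed

lemma span_restrict:
  fixes S :: "'i set" and w :: "'i \<Rightarrow> 'i \<Rightarrow> 'a::field"
  assumes fin: "finite S" and CS: "C \<subseteq> S"
    and closed: "\<forall>i\<in>C. \<forall>j\<in>S. w j i \<noteq> 0 \<longrightarrow> j \<in> C"
    and bk: "\<forall>j\<in>C. \<forall>i\<in>S. w j i \<noteq> 0 \<longrightarrow> i \<in> C"
    and k: "k \<in> C" and eq: "unitv k = Wm S w c"
  shows "\<exists>c'\<in>sub C. unitv k = Wm S w c'"
proof (intro bexI[of _ "\<lambda>i. if i \<in> C then c i else 0"])
  show "(\<lambda>i. if i \<in> C then c i else 0) \<in> sub C" by (simp add: sub_def)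
  show "unitv k = Wm S w (\<lambda>i. if i \<in> C then c i else 0)"
  proof
    fix j
    show "unitv k j = Wm S w (\<lambda>i. if i \<in> C then c i else 0) j"
    proof (cases "j \<in> S")
      case False
      then show ?thesis using k CS by (auto simp: Wm_def unitv_def)
    next
      case jS: True
      show ?thesis
      proof (cases "j \<in> C")
        case True
        have "(\<Sum>i\<in>S. (if i \<in> C then c i else 0) * w j i) = (\<Sum>i\<in>S. c i * w j i)"
          by (rule sum.cong) (use bk True in auto)
        then show ?thesis using fun_cong[OF eq, of j] jS by (simp add: Wm_def)
      next
        case False
        have "(\<Sum>i\<in>S. (if i \<in> C then c i else 0) * w j i) = 0"
          by (rule sum.neutral) (use closed False jS in auto)
        moreover have "unitv k j = (0::'a)" using False k by (auto simp: unitv_def)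
        ultimately show ?thesis using jS by (simp add: Wm_def)
      qed
    qed
  qed
qed

lemma Wm_tensor:
  fixes w1 :: "'i \<Rightarrow> 'i \<Rightarrow> 'a::field" and w2 :: "'j \<Rightarrow> 'j \<Rightarrow> 'a"
  assumes f1: "finite S1" and f2: "finite S2"
  shows "Wm (S1 \<times> S2) (tensor_struct w1 w2) (\<lambda>(k,l). c k * d l) = (\<lambda>(j,q). Wm S1 w1 c j * Wm S2 w2 d q)"
proof (rule ext, clarify)
  fix j q
  show "Wm (S1 \<times> S2) (tensor_struct w1 w2) (\<lambda>(k,l). c k * d l) (j,q) = Wm S1 w1 c j * Wm S2 w2 d q"
  proof (cases "j \<in> S1 \<and> q \<in> S2")
    case True
    have "(\<Sum>x\<in>S1 \<times> S2. (case x of (k,l) \<Rightarrow> c k * d l) * tensor_struct w1 w2 (j,q) x)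
        = (\<Sum>k\<in>S1. \<Sum>l\<in>S2. (c k * w1 j k) * (d l * w2 q l))"
      unfolding sum.cartesian_product by (rule sum.cong) (auto simp: tensor_struct_def algebra_simps)
    also have "\<dots> = (\<Sum>k\<in>S1. c k * w1 j k) * (\<Sum>l\<in>S2. d l * w2 q l)"
      by (simp add: sum_product)
    finally show ?thesis using True by (simp add: Wm_def)
  next
    case False
    then show ?thesis by (auto simp: Wm_def)
  qed
qed

lemma prod_span:
  fixes w1 :: "'i \<Rightarrow> 'i \<Rightarrow> 'a::field" and w2 :: "'j \<Rightarrow> 'j \<Rightarrow> 'a"
  assumes f1: "finite S1" and f2: "finite S2" and s1: "simple_evo S1 w1" and s2: "simple_evo S2 w2"
    and u: "u \<in> S1 \<times> S2"
  shows "\<exists>c. unitv u = Wm (S1 \<times> S2) (tensor_struct w1 w2) c"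
proof -
  obtain i p where ip: "u = (i,p)" "i \<in> S1" "p \<in> S2" using u by blast
  have "unitv i \<in> evo_carrier S1" using ip unitv_sub carrier_sub by metis
  then obtain c where c: "unitv i = Wm S1 w1 c" using simple_surj[OF f1 s1] by blast
  have "unitv p \<in> evo_carrier S2" using ip unitv_sub carrier_sub by metis
  then obtain d where d: "unitv p = Wm S2 w2 d" using simple_surj[OF f2 s2] by blast
  have "unitv u = (\<lambda>(j,q). unitv i j * unitv p q)" unfolding ip by (auto simp: unitv_def fun_eq_iff)
  also have "\<dots> = (\<lambda>(j,q). Wm S1 w1 c j * Wm S2 w2 d q)" using c d by simp
  also have "\<dots> = Wm (S1 \<times> S2) (tensor_struct w1 w2) (\<lambda>(k,l). c k * d l)"
    by (rule Wm_tensor[OF f1 f2, symmetric])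
  finally show ?thesis by blast
qed



lemma simple_nonempty:
  fixes S :: "'i set" and w :: "'i \<Rightarrow> 'i \<Rightarrow> 'a::field"
  assumes "simple_evo S w" shows "S \<noteq> {}"
proof
  assume S: "S = {}"
  from assms obtain y z where "evo_mult S w y z \<noteq> (\<lambda>i. 0)"
    unfolding simple_evo_def simple_sub_def by blast
  moreover have "evo_mult S w y z = (\<lambda>i. 0)" using S by (simp add: evo_mult_def)
  ultimately show False by simp
qed

lemma sub_inj:
  assumes "(sub A :: ('i \<Rightarrow> 'a::field) set) = sub B" shows "A = B"
proof (intro set_eqI)
  fix x
  have "(unitv x :: 'i \<Rightarrow> 'a) \<in> sub A \<longleftrightarrow> (unitv x :: 'i \<Rightarrow> 'a) \<in> sub B" using assms by simp
  then show "x \<in> A \<longleftrightarrow> x \<in> B" by (simp add: unitv_sub_iff)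
qed

lemma self_loop:
  assumes "(i,i) \<in> E1^+" "(p,p) \<in> E2^+"
  shows "((i,p),(i,p)) \<in> (PE E1 E2)^+"
proof -
  obtain n1 where n1: "n1 > 0" "(i,i) \<in> E1^^n1" using assms(1) unfolding trancl_power by blast
  obtain n2 where n2: "n2 > 0" "(p,p) \<in> E2^^n2" using assms(2) unfolding trancl_power by blast
  have "(i,i) \<in> E1^^(n2*n1)" by (rule relpow_closed_mult[OF n1(2)])
  moreover have "(p,p) \<in> E2^^(n1*n2)" by (rule relpow_closed_mult[OF n2(2)])
  ultimately have "((i,p),(i,p)) \<in> (PE E1 E2)^^(n1*n2)" unfolding PE_relpow by (simp add: mult.commute)
  moreover have "n1 * n2 > 0" using n1(1) n2(1) by simp
  ultimately show ?thesis unfolding trancl_power by blast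
qed

theorem theorem4p3:
  fixes S1 :: "'i set" and S2 :: "'j set"
    and w1 :: "'i \<Rightarrow> 'i \<Rightarrow> 'a::field" and w2 :: "'j \<Rightarrow> 'j \<Rightarrow> 'a"
  assumes "finite S1" and "finite S2"
    and "simple_evo S1 w1" and "simple_evo S2 w2"
  shows "(simple_evo (S1 \<times> S2) (tensor_struct w1 w2)
            \<longleftrightarrow> gcd (period S1 w1) (period S2 w2) = 1)
    \<and> ((\<exists>m1\<in>closed_path_lengths S1 w1. \<exists>m2\<in>closed_path_lengths S2 w2. coprime m1 m2)
            \<longrightarrow> simple_evo (S1 \<times> S2) (tensor_struct w1 w2))
    \<and> semisimple_evo (S1 \<times> S2) (tensor_struct w1 w2)"
proof -
  note f1 = assms(1) and f2 = assms(2) and s1 = assms(3) and s2 = assms(4)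
  define E1 where "E1 = edges S1 w1"
  define E2 where "E2 = edges S2 w2"
  define S where "S = S1 \<times> S2"
  define w where "w = tensor_struct w1 w2"
  have fS: "finite S" unfolding S_def using f1 f2 by simp
  have Ep: "edges S w = PE E1 E2" unfolding S_def w_def E1_def E2_def by (rule edges_tensor)
  have E1S: "E1 \<subseteq> S1 \<times> S1" unfolding E1_def by (rule edges_sub)
  have E2S: "E2 \<subseteq> S2 \<times> S2" unfolding E2_def by (rule edges_sub)
  have EpS: "PE E1 E2 \<subseteq> S \<times> S" unfolding Ep[symmetric] by (rule edges_sub)
  have sc1: "\<forall>x\<in>S1. \<forall>y\<in>S1. (x,y) \<in> E1^+" unfolding E1_def using simple_sc[OF f1 s1] by blast
  have sc2: "\<forall>x\<in>S2. \<forall>y\<in>S2. (x,y) \<in> E2^+" unfolding E2_def using simple_sc[OF f2 s2] by blast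
  have per1: "period S1 w1 = Gcd {m. 0 < m \<and> (\<exists>v. (v,v) \<in> E1^^m)}"
    unfolding period_def cpl_eq E1_def ..
  have per2: "period S2 w2 = Gcd {m. 0 < m \<and> (\<exists>v. (v,v) \<in> E2^^m)}"
    unfolding period_def cpl_eq E2_def ..
  have d1dvd: "period S1 w1 dvd m" if "0 < m" "(v,v) \<in> E1^^m" for m v
    unfolding per1 by (rule Gcd_dvd) (use that in blast)
  have d2dvd: "period S2 w2 dvd m" if "0 < m" "(v,v) \<in> E2^^m" for m v
    unfolding per2 by (rule Gcd_dvd) (use that in blast)
  obtain i0 where i0: "i0 \<in> S1" using simple_nonempty[OF s1] by blast
  obtain p0 where p0: "p0 \<in> S2" using simple_nonempty[OF s2] by blast
  have span_all: "\<forall>k\<in>C. \<exists>c\<in>sub C. unitv k = Wm S w c"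
    if CS: "C \<subseteq> S" and closed: "\<forall>i\<in>C. \<forall>j\<in>S. w j i \<noteq> 0 \<longrightarrow> j \<in> C"
      and bk: "\<forall>j\<in>C. \<forall>i\<in>S. w j i \<noteq> 0 \<longrightarrow> i \<in> C" for C
  proof
    fix k assume k: "k \<in> C"
    then have "k \<in> S1 \<times> S2" using CS S_def by blast
    then obtain c where "unitv k = Wm S w c" using prod_span[OF f1 f2 s1 s2] unfolding S_def w_def by blast
    then show "\<exists>c\<in>sub C. unitv k = Wm S w c" by (rule span_restrict[OF fS CS closed bk k])
  qed
  have part1: "simple_evo S w \<longleftrightarrow> gcd (period S1 w1) (period S2 w2) = 1"
  proof
    assume sim: "simple_evo S w"
    have "(i0,i0) \<in> E1^+" using sc1 i0 by blast
    then obtain k where ik: "(i0,k) \<in> E1" by (auto elim: converse_tranclE)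
    then have k: "k \<in> S1" using E1S by blast
    have "((i0,p0),(k,p0)) \<in> (edges S w)^+" by (rule simple_sc[OF fS sim]) (use i0 p0 k S_def in auto)
    then obtain n where n: "n > 0" "((i0,p0),(k,p0)) \<in> (PE E1 E2)^^n" unfolding Ep trancl_power by blast
    then have n1: "(i0,k) \<in> E1^^n" and n2: "(p0,p0) \<in> E2^^n" unfolding PE_relpow by auto
    have "(k,i0) \<in> E1^+" using sc1 i0 k by blast
    then obtain m where m: "m > 0" "(k,i0) \<in> E1^^m" unfolding trancl_power by blast
    have "(i0,i0) \<in> E1^^(n+m)" using n1 m(2) unfolding relpow_add by blast
    then have a: "period S1 w1 dvd n + m" using d1dvd n(1) by simp
    have "(i0,k) \<in> E1^^1" using ik by simp
    then have "(i0,i0) \<in> E1^^(1+m)" using m(2) unfolding relpow_add by blast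
    then have b: "period S1 w1 dvd 1 + m" using d1dvd by simp
    have c: "period S2 w2 dvd n" using d2dvd n(1) n2 by blast
    define g where "g = gcd (period S1 w1) (period S2 w2)"
    have gn: "g dvd n" using c unfolding g_def by (meson dvd_trans gcd_dvd2)
    have gnm: "g dvd n + m" using a unfolding g_def by (meson dvd_trans gcd_dvd1)
    have gm1: "g dvd 1 + m" using b unfolding g_def by (meson dvd_trans gcd_dvd1)
    have gm: "g dvd m" using gn gnm by (simp add: dvd_add_right_iff)
    have "g dvd 1" using gm gm1 by (metis dvd_add_right_iff add.commute)
    then show "gcd (period S1 w1) (period S2 w2) = 1" unfolding g_def by simp
  next
    assume cop: "gcd (period S1 w1) (period S2 w2) = 1"
    have sc: "\<forall>u\<in>S. \<forall>v\<in>S. (u,v) \<in> (edges S w)^+"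
    proof (intro ballI)
      fix u v assume "u \<in> S" "v \<in> S"
      then obtain i p k q where uv: "u = (i,p)" "v = (k,q)" "i \<in> S1" "p \<in> S2" "k \<in> S1" "q \<in> S2"
        unfolding S_def by blast
      obtain n where "n > 0" "(i,k) \<in> E1^^n" "(p,q) \<in> E2^^n"
        using sc_product[OF sc1 sc2 E1S E2S cop[unfolded per1 per2]] uv by blast
      then show "(u,v) \<in> (edges S w)^+" unfolding Ep trancl_power uv PE_relpow by blast
    qed
    have "evo_ideal_of S w (evo_carrier S) (sub S) \<and> simple_sub S w (sub S) \<and> has_natural_basis S w (sub S)"
      by (rule comp_simple[OF fS subset_refl])
         (use i0 p0 S_def sc span_all[of S] in auto)
    then show "simple_evo S w" unfolding simple_evo_def carrier_sub by blast
  qed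
  have part2: "(\<exists>m1\<in>closed_path_lengths S1 w1. \<exists>m2\<in>closed_path_lengths S2 w2. coprime m1 m2)
            \<longrightarrow> simple_evo S w"
  proof
    assume "\<exists>m1\<in>closed_path_lengths S1 w1. \<exists>m2\<in>closed_path_lengths S2 w2. coprime m1 m2"
    then obtain m1 m2 where m: "m1 \<in> closed_path_lengths S1 w1" "m2 \<in> closed_path_lengths S2 w2" "coprime m1 m2"
      by blast
    have "period S1 w1 dvd m1" using m(1) unfolding period_def by (rule Gcd_dvd)
    then have a: "gcd (period S1 w1) (period S2 w2) dvd m1" by (meson dvd_trans gcd_dvd1)
    have "period S2 w2 dvd m2" using m(2) unfolding period_def by (rule Gcd_dvd)
    then have b: "gcd (period S1 w1) (period S2 w2) dvd m2" by (meson dvd_trans gcd_dvd2)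
    have "gcd (period S1 w1) (period S2 w2) dvd gcd m1 m2" by (rule gcd_greatest[OF a b])
    moreover have "gcd m1 m2 = 1" using m(3) by (simp add: coprime_iff_gcd_eq_1)
    ultimately have "gcd (period S1 w1) (period S2 w2) dvd 1" by simp
    then have "gcd (period S1 w1) (period S2 w2) = 1" by simp
    then show "simple_evo S w" using part1 by simp
  qed
  define R where "R = (PE E1 E2)^+"
  have symR: "(v,u) \<in> R" if "(u,v) \<in> R" for u v
    using PE_sym[OF sc1 sc2 E1S E2S] that unfolding R_def by blast
  have transR: "(u,x) \<in> R" if "(u,v) \<in> R" "(v,x) \<in> R" for u v x
    using that unfolding R_def by (meson trancl_trans)
  have RS: "(u,v) \<in> R \<Longrightarrow> u \<in> S \<and> v \<in> S" for u v
    using trancl_subset_Sigma[OF EpS] unfolding R_def by blast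
  have reflR: "(u,u) \<in> R" if uS0: "u \<in> S" for u
  proof -
    obtain i p where "u = (i,p)" "i \<in> S1" "p \<in> S2" using uS0 S_def by blast
    then show ?thesis unfolding R_def using self_loop[of i E1 p E2] sc1 sc2 by blast
  qed
  define Cl where "Cl u = {v. (u,v) \<in> R}" for u
  have Cl_eq: "Cl v = Cl u" if "v \<in> Cl u" for u v
    using that symR transR unfolding Cl_def by blast
  have ClS: "Cl u \<subseteq> S" for u using RS unfolding Cl_def by blast
  have edgeR: "(a,b) \<in> R" if "a \<in> S" "b \<in> S" "w b a \<noteq> 0" for a b
  proof -
    have "(a,b) \<in> edges S w" using that by (simp add: edges_def)
    then show ?thesis unfolding R_def Ep[symmetric] by blast
  qed
  have comp: "evo_ideal_of S w (evo_carrier S) (sub (Cl u)) \<and> simple_sub S w (sub (Cl u))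
      \<and> has_natural_basis S w (sub (Cl u))" if uS: "u \<in> S" for u
  proof -
    have closed: "\<forall>i\<in>Cl u. \<forall>j\<in>S. w j i \<noteq> 0 \<longrightarrow> j \<in> Cl u"
      using edgeR transR ClS unfolding Cl_def by blast
    have bk: "\<forall>j\<in>Cl u. \<forall>i\<in>S. w j i \<noteq> 0 \<longrightarrow> i \<in> Cl u"
    proof (intro ballI impI)
      fix j i assume j: "j \<in> Cl u" and i: "i \<in> S" and wji: "w j i \<noteq> 0"
      have "j \<in> S" using j ClS by blast
      then have "(i,j) \<in> R" using edgeR i wji by blast
      then have "(j,i) \<in> R" by (rule symR)
      then show "i \<in> Cl u" using j transR unfolding Cl_def by blast
    qed
    have sc: "\<forall>i\<in>Cl u. \<forall>k\<in>Cl u. (i,k) \<in> (edges S w)^+"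
      using symR transR unfolding Cl_def Ep R_def[symmetric] by blast
    have ne: "Cl u \<noteq> {}" using reflR[OF uS] unfolding Cl_def by blast
    show ?thesis
      by (rule comp_simple[OF fS ClS ne closed sc span_all[OF ClS closed bk]])
  qed
  define II where "II = (\<lambda>u. (sub (Cl u) :: ('i \<times> 'j \<Rightarrow> 'a) set)) ` S"
  have finII: "finite II" unfolding II_def using fS by simp
  have part3: "semisimple_evo S w"
    unfolding semisimple_evo_def
  proof (intro exI[of _ II] conjI)
    show "finite II" by (rule finII)
    show "\<forall>I\<in>II. evo_ideal_of S w (evo_carrier S) I \<and> simple_sub S w I \<and> has_natural_basis S w I"
      unfolding II_def using comp by blast
    show "\<forall>x\<in>evo_carrier S. \<exists>f. (\<forall>I\<in>II. f I \<in> I) \<and> x = (\<lambda>i. \<Sum>I\<in>II. f I i)"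
    proof
      fix x :: "'i \<times> 'j \<Rightarrow> 'a" assume x: "x \<in> evo_carrier S"
      define f where "f I = (\<lambda>v. if v \<in> S \<and> I = sub (Cl v) then x v else 0)" for I :: "('i \<times> 'j \<Rightarrow> 'a) set"
      have fI: "f I \<in> I" if IinII: "I \<in> II" for I
      proof -
        obtain u where u: "u \<in> S" "I = sub (Cl u)" using IinII II_def by blast
        have "\<forall>v. v \<notin> Cl u \<longrightarrow> f I v = 0"
        proof (intro allI impI)
          fix v assume v: "v \<notin> Cl u"
          show "f I v = 0"
          proof (rule ccontr)
            assume "f I v \<noteq> 0"
            then have "f (sub (Cl u)) v \<noteq> 0" using u(2) by simp
            then have "v \<in> S" "sub (Cl u) = (sub (Cl v) :: ('i \<times> 'j \<Rightarrow> 'a) set)" unfolding f_def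
              by (auto split: if_splits)
            then have "Cl u = Cl v" by (simp add: sub_inj)
            moreover have "v \<in> Cl v" using reflR[OF \<open>v \<in> S\<close>] unfolding Cl_def by simp
            ultimately show False using v by simp
          qed
        qed
        then have "f I \<in> sub (Cl u)" unfolding sub_def by blast
        then show ?thesis using u(2) by simp
      qed
      have "x = (\<lambda>i. \<Sum>I\<in>II. f I i)"
      proof
        fix v
        show "x v = (\<Sum>I\<in>II. f I v)"
        proof (cases "v \<in> S")
          case True
          have "sub (Cl v) \<in> II" using True II_def by blast
          have "(\<Sum>I\<in>II. f I v) = (\<Sum>I\<in>II. if I = sub (Cl v) then x v else 0)"
            by (rule sum.cong) (auto simp: f_def True)
          also have "\<dots> = x v" using finII \<open>sub (Cl v) \<in> II\<close> by (simp add: sum.delta')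
          finally show ?thesis by simp
        next
          case False
          then have "x v = 0" using x unfolding evo_carrier_def by blast
          moreover have "(\<Sum>I\<in>II. f I v) = 0" using False by (simp add: f_def)
          ultimately show ?thesis by simp
        qed
      qed
      then show "\<exists>f. (\<forall>I\<in>II. f I \<in> I) \<and> x = (\<lambda>i. \<Sum>I\<in>II. f I i)" using fI by blast
    qed
    show "\<forall>f. (\<forall>I\<in>II. f I \<in> I) \<and> (\<lambda>i. \<Sum>I\<in>II. f I i) = (\<lambda>i. 0) \<longrightarrow> (\<forall>I\<in>II. f I = (\<lambda>i. 0))"
    proof (intro allI impI ballI)
      fix f :: "('i \<times> 'j \<Rightarrow> 'a) set \<Rightarrow> 'i \<times> 'j \<Rightarrow> 'a" and I
      assume h: "(\<forall>I\<in>II. f I \<in> I) \<and> (\<lambda>i. \<Sum>I\<in>II. f I i) = (\<lambda>i. 0)" and I: "I \<in> II"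
      obtain u where u: "u \<in> S" "I = sub (Cl u)" using I II_def by blast
      show "f I = (\<lambda>i. 0)"
      proof
        fix v
        show "f I v = 0"
        proof (cases "v \<in> Cl u")
          case False
          have "f I \<in> sub (Cl u)" using h I u(2) by simp
          then show ?thesis using False unfolding sub_def by blast
        next
          case True
          have other: "f I' v = 0" if I': "I' \<in> II" "I' \<noteq> I" for I'
          proof -
            obtain u' where u': "u' \<in> S" "I' = sub (Cl u')" using I' II_def by blast
            have "v \<notin> Cl u'"
            proof
              assume "v \<in> Cl u'"
              then have "Cl u' = Cl u" using Cl_eq True by metis
              then show False using I' u u' by simp
            qed
            moreover have "f I' \<in> sub (Cl u')" using h I'(1) u'(2) by simp
            ultimately show ?thesis unfolding sub_def by blast
          qed
          have "(\<Sum>I'\<in>II. f I' v) = (\<Sum>I'\<in>II. if I' = I then f I v else 0)"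
            by (rule sum.cong) (auto simp: other)
          also have "\<dots> = f I v" using finII I by (simp add: sum.delta')
          finally have "f I v = (\<Sum>I'\<in>II. f I' v)" by simp
          also have "\<dots> = 0" using fun_cong[OF conjunct2[OF h], of v] by simp
          finally show ?thesis .
        qed
      qed
    qed
  qed
  show ?thesis using part1 part2 part3 unfolding S_def w_def by blast
qed


end
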